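(* Let $K$ be a perfect field and let $M/K$ be obtained by strong cluster magnification from $L/K$ through a finite Galois extension $F/K$ of degree $d$. Let $L_1,\dots,L_s$ be the $s=s_K(L)$ distinct fields isomorphic to $L$ over $K$, in some order. Then the tower $K\subseteq L_1\subseteq L_1L_2\subseteq\cdots\subseteq L_1L_2\cdots L_s$ (a cluster tower for $L/K$) has length $l$ if and only if the tower $K\subseteq L_1F\subseteq L_1L_2F\subseteq\cdots\subseteq L_1L_2\cdots L_sF$ (a cluster tower for $M/K$) has length $l$. In that case, if the degree sequence of the first tower is $(a_0,a_1,\dots,a_{l-2})$, then the degree sequence of the second tower is $(da_0,da_1,\dots,da_{l-2})$.
   Context: $\bar K$ is a fixed algebraic closure of $K$; $\tilde E$ denotes the Galois closure in $\bar K$ of a finite extension $E/K$. $M/K$ is obtained by strong cluster magnification from a subextension $L/K$ through a finite Galois extension $F/K$ if $[L:K]>2$, $\tilde L\cap F=K$ and $M=LF$. For $L/K$ with $G=\mathrm{Gal}(\tilde L/K)$, $H=\mathrm{Gal}(\tilde L/L)$, $s_K(L)=[G:N_G(H)]$ is the number of distinct subfields of $\bar K$ isomorphic to $L$ over $K$. Given an ordering $(L_1,\dots,L_s)$ of these fields, the cluster tower is $K\subseteq L_1\subseteq L_1L_2\subseteq\cdots\subseteq L_1\cdots L_s=\tilde L$; its length is the number of distinct fields in the tower, and its degree sequence is the list of degrees over $K$ of the distinct fields of the tower other than $K$, in increasing order. (The distinct fields isomorphic to $M$ over $K$ are exactly the $L_iF$.) *)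

theory Defs
  imports "HOL-Algebra.Algebraic_Closure" "HOL-Algebra.Generated_Fields" "HOL-Algebra.Embedded_Algebras"
begin

(* The ambient algebraic closure \<bar>K is a HOL-Algebra field Om (a record),
   K is a subfield of its carrier, and subextensions are subfields E of Om with K \<subseteq> E. *)

definition ring_char :: "('a, 'b) ring_scheme \<Rightarrow> nat" where
  "ring_char R = (if \<exists>n::nat. n > 0 \<and> add_pow R n \<one>\<^bsub>R\<^esub> = \<zero>\<^bsub>R\<^esub>
                  then (LEAST n::nat. n > 0 \<and> add_pow R n \<one>\<^bsub>R\<^esub> = \<zero>\<^bsub>R\<^esub>) else 0)"

definition perfect_subfield :: "('a, 'b) ring_scheme \<Rightarrow> 'a set \<Rightarrow> bool" where
  "perfect_subfield R K \<longleftrightarrow> ring_char R = 0 \<or>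
     (\<forall>x\<in>K. \<exists>y\<in>K. y [^]\<^bsub>R\<^esub> (ring_char R) = x)"

definition intermediate :: "('a, 'b) ring_scheme \<Rightarrow> 'a set \<Rightarrow> 'a set \<Rightarrow> bool" where
  "intermediate R K E \<longleftrightarrow> subfield E R \<and> K \<subseteq> E"

definition finite_ext :: "('a, 'b) ring_scheme \<Rightarrow> 'a set \<Rightarrow> 'a set \<Rightarrow> bool" where
  "finite_ext R K E \<longleftrightarrow> intermediate R K E \<and> ring.finite_dimension R K E"

definition degree_over :: "('a, 'b) ring_scheme \<Rightarrow> 'a set \<Rightarrow> 'a set \<Rightarrow> nat" where
  "degree_over R K E = ring.dim R K E"

definition iso_over :: "('a, 'b) ring_scheme \<Rightarrow> 'a set \<Rightarrow> 'a set \<Rightarrow> 'a set \<Rightarrow> bool" where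
  "iso_over R K E E' \<longleftrightarrow> (\<exists>\<sigma>. \<sigma> \<in> ring_iso (R\<lparr>carrier := E\<rparr>) (R\<lparr>carrier := E'\<rparr>) \<and> (\<forall>x\<in>K. \<sigma> x = x))"

definition aut_over :: "('a, 'b) ring_scheme \<Rightarrow> 'a set \<Rightarrow> 'a set \<Rightarrow> ('a \<Rightarrow> 'a) set" where
  "aut_over R K E = (\<lambda>\<sigma>. restrict \<sigma> E) `
     {\<sigma>. \<sigma> \<in> ring_iso (R\<lparr>carrier := E\<rparr>) (R\<lparr>carrier := E\<rparr>) \<and> (\<forall>x\<in>K. \<sigma> x = x)}"

definition galois_ext :: "('a, 'b) ring_scheme \<Rightarrow> 'a set \<Rightarrow> 'a set \<Rightarrow> bool" where
  "galois_ext R K E \<longleftrightarrow> finite_ext R K E \<and> card (aut_over R K E) = degree_over R K E"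

definition galois_closure :: "('a, 'b) ring_scheme \<Rightarrow> 'a set \<Rightarrow> 'a set \<Rightarrow> 'a set" where
  "galois_closure R K E = \<Inter> {G. galois_ext R K G \<and> E \<subseteq> G}"

definition conjugates :: "('a, 'b) ring_scheme \<Rightarrow> 'a set \<Rightarrow> 'a set \<Rightarrow> 'a set set" where
  "conjugates R K E = {E'. intermediate R K E' \<and> iso_over R K E E'}"

definition compositum :: "('a, 'b) ring_scheme \<Rightarrow> 'a set set \<Rightarrow> 'a set" where
  "compositum R Es = generate_field R (\<Union> Es)"

definition strong_cluster_magnification ::
  "('a, 'b) ring_scheme \<Rightarrow> 'a set \<Rightarrow> 'a set \<Rightarrow> 'a set \<Rightarrow> 'a set \<Rightarrow> bool" where
  "strong_cluster_magnification R K M L F \<longleftrightarrow>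
     finite_ext R K L \<and> galois_ext R K F \<and> degree_over R K L > 2 \<and>
     galois_closure R K L \<inter> F = K \<and> M = compositum R {L, F}"

(* cluster tower K \<subseteq> L1 \<subseteq> L1L2 \<subseteq> ... \<subseteq> L1...Ls, each field composed additionally with F0
   (F0 = K gives the tower for L, F0 = F gives the tower for M = LF) *)
definition tower :: "('a, 'b) ring_scheme \<Rightarrow> 'a set \<Rightarrow> 'a set list \<Rightarrow> 'a set \<Rightarrow> 'a set list" where
  "tower R K Ls F0 = K # map (\<lambda>k. compositum R (set (take k Ls) \<union> {F0})) [1..<Suc (length Ls)]"

definition tower_length :: "'a set list \<Rightarrow> nat" where
  "tower_length T = card (set T)"

definition degree_sequence :: "('a, 'b) ring_scheme \<Rightarrow> 'a set \<Rightarrow> 'a set list \<Rightarrow> nat list" where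
  "degree_sequence R K T = sort (map (degree_over R K) (filter (\<lambda>E. E \<noteq> K) (remdups T)))"

end

theory Submission
  imports Defs
begin

lemma ring_iso_cong:
  assumes "ring A" "f \<in> ring_iso A B" "\<And>x. x \<in> carrier A \<Longrightarrow> f x = g x"
  shows "g \<in> ring_iso A B"
proof (rule ring_iso_memI)
  note E = ring_iso_memE[OF assms(2)]
  show "\<And>x. x \<in> carrier A \<Longrightarrow> g x \<in> carrier B" using E(1) assms(3) by metis
  show "g (x \<otimes>\<^bsub>A\<^esub> y) = g x \<otimes>\<^bsub>B\<^esub> g y" if "x \<in> carrier A" "y \<in> carrier A" for x y
    using E(2)[OF that] assms(3) that ring.ring_simprules(5)[OF assms(1)] by metis
  show "g (x \<oplus>\<^bsub>A\<^esub> y) = g x \<oplus>\<^bsub>B\<^esub> g y" if "x \<in> carrier A" "y \<in> carrier A" for x y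
    using E(3)[OF that] assms(3) that ring.ring_simprules(1)[OF assms(1)] by metis
  show "g \<one>\<^bsub>A\<^esub> = \<one>\<^bsub>B\<^esub>" using E(4) assms(3) ring.ring_simprules(6)[OF assms(1)] by metis
  show "bij_betw g (carrier A) (carrier B)" using E(5) bij_betw_cong assms(3) by metis
qed

context field
begin

lemma aut_over_mem:
  assumes "k \<subseteq> F" "subring F R"
  shows "\<tau> \<in> aut_over R k F \<longleftrightarrow> \<tau> \<in> ring_iso (R\<lparr>carrier := F\<rparr>) (R\<lparr>carrier := F\<rparr>) \<and> (\<forall>x\<in>k. \<tau> x = x) \<and> \<tau> \<in> extensional F"
proof
  have rF: "ring (R\<lparr>carrier := F\<rparr>)" using subring_is_ring[OF assms(2)] .
  assume "\<tau> \<in> aut_over R k F"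
  then obtain \<phi> where s: "\<tau> = restrict \<phi> F" "\<phi> \<in> ring_iso (R\<lparr>carrier := F\<rparr>) (R\<lparr>carrier := F\<rparr>)" "\<forall>x\<in>k. \<phi> x = x"
    unfolding aut_over_def by auto
  have "\<tau> \<in> ring_iso (R\<lparr>carrier := F\<rparr>) (R\<lparr>carrier := F\<rparr>)"
    by (rule ring_iso_cong[OF rF s(2)]) (simp add: s(1))
  then show "\<tau> \<in> ring_iso (R\<lparr>carrier := F\<rparr>) (R\<lparr>carrier := F\<rparr>) \<and> (\<forall>x\<in>k. \<tau> x = x) \<and> \<tau> \<in> extensional F"
    using s assms(1) by auto
next
  assume a: "\<tau> \<in> ring_iso (R\<lparr>carrier := F\<rparr>) (R\<lparr>carrier := F\<rparr>) \<and> (\<forall>x\<in>k. \<tau> x = x) \<and> \<tau> \<in> extensional F"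
  hence "\<tau> = restrict \<tau> F" by (simp add: extensional_restrict)
  with a show "\<tau> \<in> aut_over R k F" unfolding aut_over_def by blast
qed

lemma aut_over_closed:
  assumes "k \<subseteq> F" "subring F R" "\<tau> \<in> aut_over R k F" "x \<in> F"
  shows "\<tau> x \<in> F"
  using ring_iso_memE(1)[of \<tau> "R\<lparr>carrier := F\<rparr>" "R\<lparr>carrier := F\<rparr>"] assms aut_over_mem by auto

lemma aut_over_hom:
  assumes "k \<subseteq> F" "subring F R" "\<tau> \<in> aut_over R k F"
  shows "ring_hom_ring (R\<lparr>carrier := F\<rparr>) (R\<lparr>carrier := F\<rparr>) \<tau>"
  using assms aut_over_mem subring_is_ring[OF assms(2)]
  by (auto intro!: ring_hom_ringI2 simp: ring_iso_def)

lemma aut_over_comp: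
  assumes "k \<subseteq> F" "subring F R" "\<tau>1 \<in> aut_over R k F" "\<tau>2 \<in> aut_over R k F"
  shows "restrict (\<tau>1 \<circ> \<tau>2) F \<in> aut_over R k F"
proof -
  have rF: "ring (R\<lparr>carrier := F\<rparr>)" using subring_is_ring[OF assms(2)] .
  have "\<tau>1 \<circ> \<tau>2 \<in> ring_iso (R\<lparr>carrier := F\<rparr>) (R\<lparr>carrier := F\<rparr>)"
    using ring_iso_set_trans assms aut_over_mem by blast
  hence "restrict (\<tau>1 \<circ> \<tau>2) F \<in> ring_iso (R\<lparr>carrier := F\<rparr>) (R\<lparr>carrier := F\<rparr>)"
    by (rule ring_iso_cong[OF rF]) simp
  moreover have "\<forall>x\<in>k. restrict (\<tau>1 \<circ> \<tau>2) F x = x"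
    using assms aut_over_mem by auto
  ultimately show ?thesis using assms aut_over_mem by auto
qed

lemma aut_over_inv:
  assumes "k \<subseteq> F" "subring F R" "\<tau> \<in> aut_over R k F"
  shows "restrict (inv_into F \<tau>) F \<in> aut_over R k F"
proof -
  have rF: "ring (R\<lparr>carrier := F\<rparr>)" using subring_is_ring[OF assms(2)] .
  have iso: "\<tau> \<in> ring_iso (R\<lparr>carrier := F\<rparr>) (R\<lparr>carrier := F\<rparr>)" and fx: "\<forall>x\<in>k. \<tau> x = x"
    using assms aut_over_mem by auto
  have "inv_into F \<tau> \<in> ring_iso (R\<lparr>carrier := F\<rparr>) (R\<lparr>carrier := F\<rparr>)"
    using ring_iso_set_sym[OF rF iso] by simp
  hence "restrict (inv_into F \<tau>) F \<in> ring_iso (R\<lparr>carrier := F\<rparr>) (R\<lparr>carrier := F\<rparr>)"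
    by (rule ring_iso_cong[OF rF]) simp
  moreover have "inj_on \<tau> F" using ring_iso_memE(5)[OF iso] by (simp add: bij_betw_def)
  moreover have "\<forall>x\<in>k. restrict (inv_into F \<tau>) F x = x"
    using fx assms(1) calculation(2) by (metis inv_into_f_f restrict_apply' subsetD)
  ultimately show ?thesis using assms aut_over_mem by auto
qed

lemma aut_over_mono:
  assumes "k \<subseteq> k'" "k' \<subseteq> F" "subring F R"
  shows "aut_over R k' F \<subseteq> aut_over R k F"
  using assms aut_over_mem[of k' F] aut_over_mem[of k F] by (auto simp: subset_iff)

lemma aut_over_self:
  assumes "subring F R" shows "aut_over R F F \<subseteq> {restrict id F}"
proof
  fix \<tau> assume "\<tau> \<in> aut_over R F F"
  hence "\<forall>x\<in>F. \<tau> x = x" "\<tau> \<in> extensional F" using aut_over_mem[OF _ assms] by auto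
  thus "\<tau> \<in> {restrict id F}" by (auto simp: extensional_def fun_eq_iff)
qed

lemma fix_simple_extension:
  assumes "subring F R" "k \<subseteq> F" "\<alpha> \<in> F" "ring_hom_ring (R\<lparr>carrier := F\<rparr>) (R\<lparr>carrier := F\<rparr>) \<phi>"
    "\<forall>x\<in>k. \<phi> x = x" "\<phi> \<alpha> = \<alpha>"
  shows "y \<in> simple_extension k \<alpha> \<Longrightarrow> y \<in> F \<and> \<phi> y = y"
proof (induction rule: simple_extension.induct)
  case zero
  interpret H: ring_hom_ring "R\<lparr>carrier := F\<rparr>" "R\<lparr>carrier := F\<rparr>" \<phi> by (fact assms(4))
  show ?case using H.hom_zero subringE(2)[OF assms(1)] by simp
next
  case (lin k1 k2)
  interpret H: ring_hom_ring "R\<lparr>carrier := F\<rparr>" "R\<lparr>carrier := F\<rparr>" \<phi> by (fact assms(4))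
  have k2: "k2 \<in> F" using lin assms(2) by auto
  have m: "k1 \<otimes> \<alpha> \<in> F" using lin.IH assms(3) subringE(6)[OF assms(1)] by auto
  have "\<phi> (k1 \<otimes> \<alpha> \<oplus> k2) = \<phi> (k1 \<otimes> \<alpha>) \<oplus> \<phi> k2"
    using H.hom_add[of "k1 \<otimes> \<alpha>" k2] m k2 by simp
  also have "\<phi> (k1 \<otimes> \<alpha>) = \<phi> k1 \<otimes> \<phi> \<alpha>"
    using H.hom_mult[of k1 \<alpha>] lin.IH assms(3) by simp
  finally show ?case using lin assms subringE(7)[OF assms(1)] m k2 by auto
qed

lemma eval_fixed_hom:
  assumes "subring F R" "subring F' R" "ring_hom_ring (R\<lparr>carrier := F\<rparr>) (R\<lparr>carrier := F'\<rparr>) \<phi>"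
    "set p \<subseteq> F" "\<forall>c\<in>set p. \<phi> c = c" "x \<in> F"
  shows "\<phi> (eval p x) = eval p (\<phi> x)"
proof -
  interpret H: ring_hom_ring "R\<lparr>carrier := F\<rparr>" "R\<lparr>carrier := F'\<rparr>" \<phi> by (fact assms(3))
  have "\<phi> (H.R.eval p x) = H.S.eval (map \<phi> p) (\<phi> x)"
    using H.eval_hom'[of x p] assms by simp
  moreover have "map \<phi> p = p" using assms(5) by (induct p) auto
  ultimately show ?thesis using eval_consistent assms(1,2) by simp
qed

end

context field
begin

lemma roots_set_bound:
  assumes "p \<in> carrier (poly_ring R)" "p \<noteq> []"
  shows "finite {\<beta> \<in> carrier R. eval p \<beta> = \<zero>}" "card {\<beta> \<in> carrier R. eval p \<beta> = \<zero>} \<le> degree p"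
proof -
  have eq: "{\<beta> \<in> carrier R. eval p \<beta> = \<zero>} = set_mset (roots p)"
    using roots_mem_iff_is_root[OF assms(1)] assms(2) unfolding is_root_def by auto
  show "finite {\<beta> \<in> carrier R. eval p \<beta> = \<zero>}" unfolding eq by simp
  have "card (set_mset (roots p)) \<le> size (roots p)"
    by (metis card_image_le finite_set_mset image_id mset_set_set_mset_msubset size_mset_mono size_mset_set)
  also have "\<dots> \<le> degree p" using size_roots_le_degree[OF assms(1)] .
  finally show "card {\<beta> \<in> carrier R. eval p \<beta> = \<zero>} \<le> degree p" unfolding eq .
qed

lemma Irr_props:
  assumes "subfield k R" "\<alpha> \<in> carrier R" "(algebraic over k) \<alpha>"
  shows "set (Irr k \<alpha>) \<subseteq> k" "Irr k \<alpha> \<in> carrier (poly_ring R)" "Irr k \<alpha> \<noteq> []"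
    "eval (Irr k \<alpha>) \<alpha> = \<zero>"
proof -
  have c: "Irr k \<alpha> \<in> carrier (k[X])" using IrrE(1)[OF assms] .
  thus "set (Irr k \<alpha>) \<subseteq> k"
    using polynomial_incl univ_poly_carrier by blast
  show "Irr k \<alpha> \<in> carrier (poly_ring R)"
    using c carrier_polynomial_shell[OF subfieldE(1)[OF assms(1)]] by blast
  show "Irr k \<alpha> \<noteq> []" using IrrE(2)[OF assms] unfolding ring_irreducible_def univ_poly_zero by auto
  show "eval (Irr k \<alpha>) \<alpha> = \<zero>" using IrrE(4)[OF assms] .
qed

lemma aut_root:
  assumes k: "subfield k R" and F: "subfield F R" and kF: "k \<subseteq> F" and \<alpha>: "\<alpha> \<in> F"
    and alg: "(algebraic over k) \<alpha>" and \<tau>: "\<tau> \<in> aut_over R k F"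
  shows "\<tau> \<alpha> \<in> F" "eval (Irr k \<alpha>) (\<tau> \<alpha>) = \<zero>"
proof -
  have Fs: "subring F R" using subfieldE(1)[OF F] .
  have ac: "\<alpha> \<in> carrier R" using \<alpha> subringE(1)[OF Fs] by auto
  show "\<tau> \<alpha> \<in> F" using aut_over_closed[OF kF Fs \<tau> \<alpha>] .
  interpret H: ring_hom_ring "R\<lparr>carrier := F\<rparr>" "R\<lparr>carrier := F\<rparr>" \<tau>
    using aut_over_hom[OF kF Fs \<tau>] .
  have "\<tau> (eval (Irr k \<alpha>) \<alpha>) = eval (Irr k \<alpha>) (\<tau> \<alpha>)"
    apply (rule eval_fixed_hom[OF Fs Fs aut_over_hom[OF kF Fs \<tau>]])
    using Irr_props(1)[OF k ac alg] kF \<tau> aut_over_mem[OF kF Fs] \<alpha> by auto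
  moreover have "\<tau> \<zero> = \<zero>" using H.hom_zero by simp
  ultimately show "eval (Irr k \<alpha>) (\<tau> \<alpha>) = \<zero>" using Irr_props(4)[OF k ac alg] by simp
qed

lemma aut_count:
  assumes k: "subfield k R" and F: "subfield F R" and kF: "k \<subseteq> F" and \<alpha>: "\<alpha> \<in> F"
    and alg: "(algebraic over k) \<alpha>"
    and finB: "finite (aut_over R (simple_extension k \<alpha>) F)"
  shows "finite (aut_over R k F) \<and> card (aut_over R k F) \<le>
     card {\<beta> \<in> carrier R. eval (Irr k \<alpha>) \<beta> = \<zero> \<and> \<beta> \<in> F} * card (aut_over R (simple_extension k \<alpha>) F)"
proof -
  define A where "A = aut_over R k F"
  define k1 where "k1 = simple_extension k \<alpha>"
  define B where "B = aut_over R k1 F"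
  define S where "S = {\<beta> \<in> carrier R. eval (Irr k \<alpha>) \<beta> = \<zero> \<and> \<beta> \<in> F}"
  have Fs: "subring F R" using subfieldE(1)[OF F] .
  have ac: "\<alpha> \<in> carrier R" using \<alpha> subringE(1)[OF Fs] by auto
  have k1F: "k1 \<subseteq> F" unfolding k1_def using simple_extension_subring_incl[OF Fs kF \<alpha>] .
  have kk1: "k \<subseteq> k1" unfolding k1_def using simple_extension_incl[OF _ ac] subfieldE(3)[OF k] .
  have finS: "finite S"
    using roots_set_bound(1)[OF Irr_props(2,3)[OF k ac alg]] unfolding S_def
    by (rule rev_finite_subset) auto
  define img where "img = (\<lambda>\<tau>. \<tau> \<alpha>) ` A"
  define Fb where "Fb = (\<lambda>\<beta>. {\<tau> \<in> A. \<tau> \<alpha> = \<beta>})"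
  have imgS: "img \<subseteq> S"
    unfolding img_def S_def A_def using aut_root[OF k F kF \<alpha> alg] subringE(1)[OF Fs] by blast
  have AU: "A = (\<Union>\<beta>\<in>img. Fb \<beta>)" unfolding img_def Fb_def by auto
  have fib: "finite (Fb \<beta>) \<and> card (Fb \<beta>) \<le> card B" if bimg: "\<beta> \<in> img" for \<beta>
  proof -
    obtain \<tau>0 where t0: "\<tau>0 \<in> A" "\<tau>0 \<alpha> = \<beta>" using bimg unfolding img_def by auto
    have iso0: "\<tau>0 \<in> ring_iso (R\<lparr>carrier := F\<rparr>) (R\<lparr>carrier := F\<rparr>)"
      using t0 aut_over_mem[OF kF Fs] unfolding A_def by auto
    have inj0: "inj_on \<tau>0 F" and surj0: "\<tau>0 ` F = F"
      using ring_iso_memE(5)[OF iso0] by (auto simp: bij_betw_def)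
    define \<iota> where "\<iota> = restrict (inv_into F \<tau>0) F"
    have \<iota>A: "\<iota> \<in> A" unfolding \<iota>_def A_def using aut_over_inv[OF kF Fs] t0 A_def by auto
    define g where "g = (\<lambda>\<tau>. restrict (\<iota> \<circ> \<tau>) F)"
    have gB: "g \<tau> \<in> B" if "\<tau> \<in> Fb \<beta>" for \<tau>
    proof -
      have tA: "\<tau> \<in> A" "\<tau> \<alpha> = \<beta>" using that unfolding Fb_def by auto
      have gA: "g \<tau> \<in> A" unfolding g_def A_def using aut_over_comp[OF kF Fs] \<iota>A tA A_def by auto
      have bF: "\<beta> \<in> F" using aut_over_closed[OF kF Fs t0(1)[unfolded A_def] \<alpha>] t0(2) by simp
      have "g \<tau> \<alpha> = \<alpha>" unfolding g_def \<iota>_def using tA t0 \<alpha> inj0 bF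
        using inv_into_f_f[OF inj0 \<alpha>] by simp
      hence fixk1: "\<forall>y\<in>k1. g \<tau> y = y"
        using fix_simple_extension[OF Fs kF \<alpha> aut_over_hom[OF kF Fs gA[unfolded A_def]]]
              gA aut_over_mem[OF kF Fs] unfolding k1_def A_def by auto
      show ?thesis unfolding B_def using gA fixk1 aut_over_mem[OF kF Fs] aut_over_mem[OF k1F Fs]
        unfolding A_def by auto
    qed
    have ginj: "inj_on g (Fb \<beta>)"
    proof
      fix \<tau>1 \<tau>2 assume t: "\<tau>1 \<in> Fb \<beta>" "\<tau>2 \<in> Fb \<beta>" "g \<tau>1 = g \<tau>2"
      have tA: "\<tau>1 \<in> A" "\<tau>2 \<in> A" using t unfolding Fb_def by auto
      have injI: "inj_on (inv_into F \<tau>0) F" using inj_on_inv_into[of F \<tau>0 F] surj0 by simp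
      show "\<tau>1 = \<tau>2"
      proof (rule extensionalityI[of _ F])
        show "\<tau>1 \<in> extensional F" "\<tau>2 \<in> extensional F"
          using tA aut_over_mem[OF kF Fs] unfolding A_def by auto
        fix x assume x: "x \<in> F"
        have "g \<tau>1 x = g \<tau>2 x" using t by simp
        hence "inv_into F \<tau>0 (\<tau>1 x) = inv_into F \<tau>0 (\<tau>2 x)"
          unfolding g_def \<iota>_def using x tA aut_over_closed[OF kF Fs] unfolding A_def by auto
        thus "\<tau>1 x = \<tau>2 x"
          using injI x tA aut_over_closed[OF kF Fs] unfolding A_def inj_on_def by blast
      qed
    qed
    have finB': "finite B" using finB unfolding B_def k1_def .
    have "g ` Fb \<beta> \<subseteq> B" using gB by auto
    hence "finite (g ` Fb \<beta>)" using finB' rev_finite_subset by blast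
    hence "finite (Fb \<beta>)" using ginj finite_imageD by blast
    moreover have "card (Fb \<beta>) \<le> card B" using card_inj_on_le[OF ginj _ finB'] gB by auto
    ultimately show ?thesis by simp
  qed
  have finimg: "finite img" using finS imgS rev_finite_subset by auto
  have finA: "finite A" unfolding AU using finimg fib by auto
  have "card A \<le> (\<Sum>\<beta>\<in>img. card (Fb \<beta>))" unfolding AU using card_UN_le[OF finimg] by blast
  also have "\<dots> \<le> (\<Sum>\<beta>\<in>img. card B)" by (rule sum_mono) (use fib in auto)
  also have "\<dots> = card img * card B" by simp
  also have "\<dots> \<le> card S * card B" using card_mono[OF finS imgS] by simp
  finally show ?thesis using finA unfolding A_def S_def B_def k1_def by simp
qed

end

context field
begin

lemma dim_eq_imp_eq:
  assumes "subfield K R" "E1 \<subseteq> E2" "dimension n K E1" "dimension n K E2"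
  shows "E1 = E2"
proof -
  obtain Vs where Vs: "set Vs \<subseteq> carrier R" "independent K Vs" "length Vs = n" "Span K Vs = E1"
    using exists_base[OF assms(1,3)] by auto
  have "set Vs \<subseteq> E2" using Span_base_incl[OF assms(1) Vs(1)] Vs(4) assms(2) by auto
  hence "Span K Vs = E2" using independent_length_eq_dimension[OF assms(1,4) Vs(2)] Vs(3) by auto
  thus ?thesis using Vs(4) by simp
qed

lemma subring_subalgebra:
  assumes "subring E R" "k \<subseteq> E" shows "subalgebra k E R"
  using assms subring.axioms(1)[OF assms(1)] subringE(6)[OF assms(1)]
  unfolding subalgebra_def subalgebra_axioms_def by auto

lemma dim_pos:
  assumes "subfield K R" "subring E R" "dimension n K E" shows "n > 0"
proof (rule ccontr)
  assume "\<not> n > 0" hence "n = 0" by simp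
  hence "E = {\<zero>}" using dimension_zero[OF assms(1)] assms(3) by simp
  moreover have "\<one> \<in> E" using subringE(3)[OF assms(2)] .
  ultimately show False by simp
qed

lemma finite_dim_bigger:
  assumes k: "subfield k R" and k1: "subfield k1 R" and "k \<subseteq> k1" "k1 \<subseteq> F" "subring F R"
    and fin: "finite_dimension k F"
  shows "finite_dimension k1 F"
proof -
  obtain n where n: "dimension n k F" using fin by auto
  obtain Vs where Vs: "set Vs \<subseteq> carrier R" "independent k Vs" "length Vs = n" "Span k Vs = F"
    using exists_base[OF k n] by auto
  have VsF: "set Vs \<subseteq> F" using Span_base_incl[OF k Vs(1)] Vs(4) by auto
  have "Span k1 Vs \<subseteq> F"
    using subalgebra_Span_incl[OF k1 subring_subalgebra[OF assms(5,4)] VsF] .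
  moreover have "F \<subseteq> Span k1 Vs"
  proof
    fix x assume "x \<in> F"
    hence "x \<in> { combine Ks Vs | Ks. set Ks \<subseteq> k }" using Span_eq_combine_set[OF k Vs(1)] Vs(4) by simp
    then obtain Ks where "x = combine Ks Vs" "set Ks \<subseteq> k" by blast
    hence "x \<in> { combine Ks Vs | Ks. set Ks \<subseteq> k1 }" using assms(3) by blast
    thus "x \<in> Span k1 Vs" using Span_eq_combine_set[OF k1 Vs(1)] by simp
  qed
  ultimately have "Span k1 Vs = F" by auto
  thus ?thesis using Span_finite_dimension[OF k1 Vs(1)] by simp
qed

lemma simple_ext_facts:
  assumes k: "subfield k R" and F: "subfield F R" and kF: "k \<subseteq> F" and fin: "finite_dimension k F"
    and \<alpha>: "\<alpha> \<in> F"
  shows "(algebraic over k) \<alpha>" "subfield (simple_extension k \<alpha>) R"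
    "simple_extension k \<alpha> \<subseteq> F" "k \<subseteq> simple_extension k \<alpha>"
    "dim k (simple_extension k \<alpha>) = degree (Irr k \<alpha>)"
    "finite_dimension (simple_extension k \<alpha>) F"
    "dim k F = degree (Irr k \<alpha>) * dim (simple_extension k \<alpha>) F"
    "dim (simple_extension k \<alpha>) F > 0"
proof -
  have Fs: "subring F R" using subfieldE(1)[OF F] .
  have ac: "\<alpha> \<in> carrier R" using \<alpha> subringE(1)[OF Fs] by auto
  show alg: "(algebraic over k) \<alpha>"
    using finite_dimension_imp_algebraic[OF k Fs fin \<alpha>] .
  show k1: "subfield (simple_extension k \<alpha>) R" using simple_extension_is_subfield[OF k ac] alg by simp
  show k1F: "simple_extension k \<alpha> \<subseteq> F" using simple_extension_subring_incl[OF Fs kF \<alpha>] .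
  show kk1: "k \<subseteq> simple_extension k \<alpha>" using simple_extension_incl[OF _ ac] subfieldE(3)[OF k] by auto
  have d: "dimension (degree (Irr k \<alpha>)) k (simple_extension k \<alpha>)"
    using dimension_simple_extension[OF k ac alg] .
  show "dim k (simple_extension k \<alpha>) = degree (Irr k \<alpha>)" using dimI[OF k d] by (simp add: over_def)
  show fin1: "finite_dimension (simple_extension k \<alpha>) F"
    using finite_dim_bigger[OF k k1 kk1 k1F Fs fin] .
  show "dim k F = degree (Irr k \<alpha>) * dim (simple_extension k \<alpha>) F"
    using telescopic_base_dim(2)[OF k k1 finite_dimensionI[OF d] fin1] dimI[OF k d]
    by (simp add: over_def)
  obtain m where "dimension m (simple_extension k \<alpha>) F" using fin1 by auto
  thus "dim (simple_extension k \<alpha>) F > 0"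
    using dim_pos[OF k1 Fs] dimI[OF k1] by (simp add: over_def)
qed

lemma simple_ext_degree_ge2:
  assumes k: "subfield k R" and "\<alpha> \<in> carrier R" "(algebraic over k) \<alpha>" "\<alpha> \<notin> k"
  shows "degree (Irr k \<alpha>) \<ge> 2"
proof -
  have d: "dimension (degree (Irr k \<alpha>)) k (simple_extension k \<alpha>)"
    using dimension_simple_extension[OF k assms(2,3)] .
  have k1: "subfield (simple_extension k \<alpha>) R" using simple_extension_is_subfield[OF k assms(2)] assms(3) by simp
  have "degree (Irr k \<alpha>) > 0" using dim_pos[OF k subfieldE(1)[OF k1] d] .
  moreover have "degree (Irr k \<alpha>) \<noteq> 1"
  proof
    assume "degree (Irr k \<alpha>) = 1"
    hence "k = simple_extension k \<alpha>"
      using dim_eq_imp_eq[OF k _ dimension_one[OF k]] d simple_extension_incl[OF _ assms(2)] subfieldE(3)[OF k]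
      by auto
    thus False using simple_extension_mem[OF subfieldE(1)[OF k] assms(2)] assms(4) by auto
  qed
  ultimately show ?thesis by linarith
qed

lemma aut_le_dim:
  assumes "subfield k R" "subfield F R" "k \<subseteq> F" "finite_dimension k F"
  shows "finite (aut_over R k F) \<and> card (aut_over R k F) \<le> dim k F"
  using assms
proof (induction "dim k F" arbitrary: k rule: less_induct)
  case less
  note k = less.prems(1) and F = less.prems(2) and kF = less.prems(3) and fin = less.prems(4)
  have Fs: "subring F R" using subfieldE(1)[OF F] .
  obtain n where n: "dimension n k F" using fin by auto
  have dpos: "dim k F > 0" using dim_pos[OF k Fs n] dimI[OF k n] by (simp add: over_def)
  show ?case
  proof (cases "F \<subseteq> k")
    case True
    hence "k = F" using kF by auto
    hence "aut_over R k F \<subseteq> {restrict id F}" using aut_over_self[OF Fs] by simp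
    hence "finite (aut_over R k F)" "card (aut_over R k F) \<le> 1"
      using finite_subset card_mono[of "{restrict id F}"] by auto
    thus ?thesis using dpos by auto
  next
    case False
    then obtain \<alpha> where \<alpha>: "\<alpha> \<in> F" "\<alpha> \<notin> k" by auto
    have ac: "\<alpha> \<in> carrier R" using \<alpha> subringE(1)[OF Fs] by auto
    note sf = simple_ext_facts[OF k F kF fin \<alpha>(1)]
    have ge2: "degree (Irr k \<alpha>) \<ge> 2" using simple_ext_degree_ge2[OF k ac sf(1) \<alpha>(2)] .
    have lt: "dim (simple_extension k \<alpha>) F < dim k F" using sf(7,8) ge2 by simp
    have IH: "finite (aut_over R (simple_extension k \<alpha>) F) \<and> card (aut_over R (simple_extension k \<alpha>) F) \<le> dim (simple_extension k \<alpha>) F"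
      using less.hyps[OF lt sf(2) F sf(3) sf(6)] .
    have cnt: "finite (aut_over R k F) \<and> card (aut_over R k F) \<le>
       card {\<beta> \<in> carrier R. eval (Irr k \<alpha>) \<beta> = \<zero> \<and> \<beta> \<in> F} * card (aut_over R (simple_extension k \<alpha>) F)"
      using aut_count[OF k F kF \<alpha>(1) sf(1)] IH by simp
    have rb: "card {\<beta> \<in> carrier R. eval (Irr k \<alpha>) \<beta> = \<zero> \<and> \<beta> \<in> F} \<le> degree (Irr k \<alpha>)"
    proof -
      have "card {\<beta> \<in> carrier R. eval (Irr k \<alpha>) \<beta> = \<zero> \<and> \<beta> \<in> F} \<le> card {\<beta> \<in> carrier R. eval (Irr k \<alpha>) \<beta> = \<zero>}"
        by (rule card_mono[OF roots_set_bound(1)[OF Irr_props(2,3)[OF k ac sf(1)]]]) auto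
      thus ?thesis using roots_set_bound(2)[OF Irr_props(2,3)[OF k ac sf(1)]] by linarith
    qed
    have "card (aut_over R k F) \<le> degree (Irr k \<alpha>) * dim (simple_extension k \<alpha>) F"
    proof -
      have "card {\<beta> \<in> carrier R. eval (Irr k \<alpha>) \<beta> = \<zero> \<and> \<beta> \<in> F} * card (aut_over R (simple_extension k \<alpha>) F)
        \<le> degree (Irr k \<alpha>) * dim (simple_extension k \<alpha>) F"
        using rb IH mult_le_mono by blast
      thus ?thesis using cnt by linarith
    qed
    thus ?thesis using cnt sf(7) by simp
  qed
qed

lemma galois_normal:
  assumes K: "subfield K R" and F: "subfield F R" and KF: "K \<subseteq> F" and fin: "finite_dimension K F"
    and gal: "card (aut_over R K F) = dim K F"
    and \<alpha>: "\<alpha> \<in> F" and \<beta>: "\<beta> \<in> carrier R" "eval (Irr K \<alpha>) \<beta> = \<zero>"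
  shows "\<beta> \<in> F"
proof (rule ccontr)
  assume nb: "\<beta> \<notin> F"
  have Fs: "subring F R" using subfieldE(1)[OF F] .
  have ac: "\<alpha> \<in> carrier R" using \<alpha> subringE(1)[OF Fs] by auto
  note sf = simple_ext_facts[OF K F KF fin \<alpha>]
  define Sall where "Sall = {\<beta> \<in> carrier R. eval (Irr K \<alpha>) \<beta> = \<zero>}"
  define SF where "SF = {\<beta> \<in> carrier R. eval (Irr K \<alpha>) \<beta> = \<zero> \<and> \<beta> \<in> F}"
  note rb = roots_set_bound[OF Irr_props(2,3)[OF K ac sf(1)], folded Sall_def]
  have "SF \<subset> Sall" using \<beta> nb unfolding SF_def Sall_def by auto
  hence "card SF < card Sall" using rb(1) psubset_card_mono by blast
  hence lt: "card SF < degree (Irr K \<alpha>)" using rb(2) by simp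
  have IH: "finite (aut_over R (simple_extension K \<alpha>) F) \<and> card (aut_over R (simple_extension K \<alpha>) F) \<le> dim (simple_extension K \<alpha>) F"
    using aut_le_dim[OF sf(2) F sf(3) sf(6)] .
  have cnt: "card (aut_over R K F) \<le> card SF * card (aut_over R (simple_extension K \<alpha>) F)"
    using aut_count[OF K F KF \<alpha> sf(1)] IH unfolding SF_def by simp
  also have "\<dots> \<le> card SF * dim (simple_extension K \<alpha>) F" using IH by simp
  also have "\<dots> < degree (Irr K \<alpha>) * dim (simple_extension K \<alpha>) F" using lt sf(8) by simp
  finally show False using gal sf(7) by simp
qed

end

context field
begin

lemma conj_in_galois:
  assumes K: "subfield K R" and G: "subfield G R" and KG: "K \<subseteq> G" and fin: "finite_dimension K G"
    and gal: "card (aut_over R K G) = dim K G"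
    and LG: "L \<subseteq> G" and L: "subring L R" and L': "subring L' R" and KL: "K \<subseteq> L"
    and iso: "\<phi> \<in> ring_iso (R\<lparr>carrier := L\<rparr>) (R\<lparr>carrier := L'\<rparr>)" and fx: "\<forall>x\<in>K. \<phi> x = x"
  shows "L' \<subseteq> G"
proof
  fix y assume y: "y \<in> L'"
  have "\<phi> ` L = L'" using ring_iso_memE(5)[OF iso] by (simp add: bij_betw_def)
  then obtain x where x: "x \<in> L" "y = \<phi> x" using y by auto
  have Gs: "subring G R" using subfieldE(1)[OF G] .
  have xG: "x \<in> G" using x LG by auto
  have xc: "x \<in> carrier R" using xG subringE(1)[OF Gs] by auto
  have alg: "(algebraic over K) x" using finite_dimension_imp_algebraic[OF K Gs fin xG] .
  have hom: "ring_hom_ring (R\<lparr>carrier := L\<rparr>) (R\<lparr>carrier := L'\<rparr>) \<phi>"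
    using iso subring_is_ring[OF L] subring_is_ring[OF L']
    by (auto intro!: ring_hom_ringI2 simp: ring_iso_def)
  interpret H: ring_hom_ring "R\<lparr>carrier := L\<rparr>" "R\<lparr>carrier := L'\<rparr>" \<phi> by (fact hom)
  have "\<phi> (eval (Irr K x) x) = eval (Irr K x) (\<phi> x)"
    by (rule eval_fixed_hom[OF L L' hom]) (use Irr_props(1)[OF K xc alg] KL fx x in auto)
  moreover have "\<phi> \<zero> = \<zero>" using H.hom_zero by simp
  ultimately have "eval (Irr K x) (\<phi> x) = \<zero>" using Irr_props(4)[OF K xc alg] by simp
  moreover have "\<phi> x \<in> carrier R" using x y L' subringE(1) by auto
  ultimately show "y \<in> G" using galois_normal[OF K G KG fin gal xG] x by auto
qed

lemma inv_cancel:
  assumes "a \<in> carrier R" "a \<noteq> \<zero>" "y \<in> carrier R" shows "inv a \<otimes> (a \<otimes> y) = y"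
proof -
  have u: "a \<in> Units R" using field_Units assms by auto
  have "inv a \<otimes> (a \<otimes> y) = (inv a \<otimes> a) \<otimes> y" using m_assoc Units_inv_closed[OF u] assms by simp
  also have "\<dots> = y" using Units_l_inv[OF u] assms by simp
  finally show ?thesis .
qed

lemma subsingleton_finite: "(\<And>a b. a \<in> S \<Longrightarrow> b \<in> S \<Longrightarrow> a = b) \<Longrightarrow> finite S"
proof (cases "S = {}")
  case False
  assume h: "\<And>a b. a \<in> S \<Longrightarrow> b \<in> S \<Longrightarrow> a = b"
  then obtain a where "a \<in> S" using False by auto
  hence "S \<subseteq> {a}" using h by auto
  thus ?thesis using finite_subset by auto
qed simp

lemma avoid_subspaces:
  assumes K: "subfield K R" "infinite K" and F: "subring F R" "K \<subseteq> F"
    and finV: "finite V"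
    and W: "\<And>W. W \<in> V \<Longrightarrow> W \<subseteq> F \<and> (\<forall>x\<in>W. \<forall>y\<in>W. x \<oplus> y \<in> W) \<and> (\<forall>c\<in>K. \<forall>x\<in>W. c \<otimes> x \<in> W) \<and> (\<exists>x\<in>F. x \<notin> W)"
  shows "\<exists>x\<in>F. \<forall>W\<in>V. x \<notin> W"
  using finV W
proof (induction V rule: finite_induct)
  case empty
  then show ?case using subringE(2)[OF F(1)] by auto
next
  case (insert W0 V)
  have Fc: "F \<subseteq> carrier R" using subringE(1)[OF F(1)] .
  have Kc: "K \<subseteq> carrier R" using subfieldE(3)[OF K(1)] .
  obtain x where x: "x \<in> F" "\<forall>W\<in>V. x \<notin> W" using insert by auto
  show ?case
  proof (cases "x \<in> W0")
    case False thus ?thesis using x by auto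
  next
    case True
    have W0: "W0 \<subseteq> F" "\<forall>x\<in>W0. \<forall>y\<in>W0. x \<oplus> y \<in> W0" "\<forall>c\<in>K. \<forall>x\<in>W0. c \<otimes> x \<in> W0" "\<exists>x\<in>F. x \<notin> W0"
      using insert.prems[of W0] by auto
    obtain y where y: "y \<in> F" "y \<notin> W0" using W0(4) by auto
    have xc: "x \<in> carrier R" and yc: "y \<in> carrier R" using x y Fc by auto
    have mK: "\<ominus> \<one> \<in> K" using subringE(3,5)[OF subfieldE(1)[OF K(1)]] by auto
    define B where "B = {\<zero>} \<union> (\<Union>W\<in>V. {c \<in> K. x \<oplus> c \<otimes> y \<in> W})"
    have finB: "finite B" unfolding B_def
    proof (intro finite_UnI finite_UN_I insert.hyps(1))
      fix W assume WV: "W \<in> V"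
      have WP: "W \<subseteq> F" "\<forall>x\<in>W. \<forall>y\<in>W. x \<oplus> y \<in> W" "\<forall>c\<in>K. \<forall>x\<in>W. c \<otimes> x \<in> W"
        using insert.prems[of W] WV by auto
      show "finite {c \<in> K. x \<oplus> c \<otimes> y \<in> W}"
      proof (rule subsingleton_finite, rule ccontr)
        fix c c' assume cc: "c \<in> {c \<in> K. x \<oplus> c \<otimes> y \<in> W}" "c' \<in> {c \<in> K. x \<oplus> c \<otimes> y \<in> W}" "c \<noteq> c'"
        have c: "c \<in> carrier R" "c' \<in> carrier R" using cc Kc by auto
        have "(x \<oplus> c \<otimes> y) \<oplus> (\<ominus> \<one>) \<otimes> (x \<oplus> c' \<otimes> y) \<in> W" using WP cc mK by auto
        moreover have "(x \<oplus> c \<otimes> y) \<oplus> (\<ominus> \<one>) \<otimes> (x \<oplus> c' \<otimes> y) = (c \<ominus> c') \<otimes> y"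
          using xc yc c by algebra
        ultimately have d: "(c \<ominus> c') \<otimes> y \<in> W" by simp
        have dK: "c \<ominus> c' \<in> K" using cc subringE(5,7)[OF subfieldE(1)[OF K(1)]] by (auto simp: minus_eq)
        have dnz: "c \<ominus> c' \<noteq> \<zero>" using cc(3) c by (metis r_right_minus_eq)
        have iK: "inv (c \<ominus> c') \<in> K" using subfield_m_inv(1)[OF K(1)] dK dnz by auto
        have "inv (c \<ominus> c') \<otimes> ((c \<ominus> c') \<otimes> y) = y"
          using inv_cancel dK dnz Kc yc by auto
        hence yW: "y \<in> W" using WP(3) iK d by metis
        have "(x \<oplus> c \<otimes> y) \<oplus> (\<ominus> c) \<otimes> y \<in> W"
          using WP cc yW subringE(5)[OF subfieldE(1)[OF K(1)]] by auto
        moreover have "(x \<oplus> c \<otimes> y) \<oplus> (\<ominus> c) \<otimes> y = x" using xc yc c by algebra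
        ultimately show False using x WV by auto
      qed
    qed simp
    obtain c where c: "c \<in> K" "c \<notin> B" using K(2) finB by (meson ex_in_conv finite_subset subsetI)
    have cc: "c \<in> carrier R" using c Kc by auto
    define z where "z = x \<oplus> c \<otimes> y"
    have zF: "z \<in> F" unfolding z_def using x y c F subringE(6,7)[OF F(1)] by auto
    have "z \<notin> W0"
    proof
      assume "z \<in> W0"
      hence "z \<oplus> (\<ominus> \<one>) \<otimes> x \<in> W0" using W0 True mK by auto
      moreover have "z \<oplus> (\<ominus> \<one>) \<otimes> x = c \<otimes> y" unfolding z_def using xc yc cc by algebra
      ultimately have cy: "c \<otimes> y \<in> W0" by simp
      have cnz: "c \<noteq> \<zero>" using c unfolding B_def by auto
      have iK: "inv c \<in> K" using subfield_m_inv(1)[OF K(1)] c cnz by auto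
      have "inv c \<otimes> (c \<otimes> y) = y"
        using inv_cancel cc cnz yc by auto
      hence "y \<in> W0" using W0(3) iK cy by metis
      thus False using y by simp
    qed
    moreover have "\<forall>W\<in>V. z \<notin> W" using c unfolding B_def z_def by auto
    ultimately show ?thesis using zF by auto
  qed
qed

end

context field
begin

lemma finite_dim_finite:
  assumes K: "subfield K R" "finite K" and fin: "finite_dimension K F"
  shows "finite F"
proof -
  obtain n where n: "dimension n K F" using fin by auto
  obtain Vs where Vs: "set Vs \<subseteq> carrier R" "independent K Vs" "length Vs = n" "Span K Vs = F"
    using exists_base[OF K(1) n] by auto
  have "F = (\<lambda>Ks. combine Ks Vs) ` {Ks. set Ks \<subseteq> K \<and> length Ks = length Vs}"
    using Span_eq_combine_set_length_version[OF K(1) Vs(1)] Vs(4) by auto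
  thus ?thesis using finite_lists_length_eq[OF K(2)] by simp
qed

lemma subring_pow_closed:
  assumes "subring S R" "a \<in> S" shows "a [^] (i::nat) \<in> S"
proof (induction i)
  case 0 then show ?case using subringE(3)[OF assms(1)] by simp
next
  case (Suc i) then show ?case using subringE(6)[OF assms(1)] assms(2) by simp
qed

lemma primitive_element:
  assumes K: "subfield K R" and F: "subfield F R" and KF: "K \<subseteq> F" and fin: "finite_dimension K F"
    and gal: "card (aut_over R K F) = dim K F"
  shows "\<exists>\<theta>\<in>F. simple_extension K \<theta> = F"
proof -
  have Fs: "subring F R" using subfieldE(1)[OF F] .
  have Fc: "F \<subseteq> carrier R" using subringE(1)[OF Fs] .
  show ?thesis
  proof (cases "finite F")
    case True
    have fld: "field (R\<lparr>carrier := F\<rparr>)" using subfield_iff(2)[OF F] .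
    obtain a where a: "a \<in> carrier (mult_of (R\<lparr>carrier := F\<rparr>))"
      "carrier (mult_of (R\<lparr>carrier := F\<rparr>)) = {a [^]\<^bsub>R\<lparr>carrier := F\<rparr>\<^esub> i | i::nat. i \<in> UNIV}"
      using field.finite_field_mult_group_has_gen[OF fld] True by auto
    have aF: "a \<in> F" using a(1) by simp
    have ac: "a \<in> carrier R" using aF Fc by auto
    have Ks: "subring (simple_extension K a) R"
      using simple_extension_is_subring[OF subfieldE(1)[OF K] ac] .
    have "F \<subseteq> simple_extension K a"
    proof
      fix x assume x: "x \<in> F"
      show "x \<in> simple_extension K a"
      proof (cases "x = \<zero>")
        case True thus ?thesis by simp
      next
        case False
        hence "x \<in> carrier (mult_of (R\<lparr>carrier := F\<rparr>))" using x by simp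
        then obtain i :: nat where "x = a [^]\<^bsub>R\<lparr>carrier := F\<rparr>\<^esub> i" using a(2) by auto
        hence "x = a [^] i" using nat_pow_consistent by simp
        thus ?thesis using subring_pow_closed[OF Ks simple_extension_mem[OF subfieldE(1)[OF K] ac]] by simp
      qed
    qed
    moreover have "simple_extension K a \<subseteq> F" using simple_extension_subring_incl[OF Fs KF aF] .
    ultimately show ?thesis using aF by blast
  next
    case False
    have infK: "infinite K" using finite_dim_finite[OF K _ fin] False by auto
    define H where "H = aut_over R K F"
    obtain n where n: "dimension n K F" using fin by auto
    have dpos: "dim K F > 0" using dim_pos[OF K Fs n] dimI[OF K n] by (simp add: over_def)
    have finH: "finite H" proof (rule ccontr)
      assume "infinite H" hence "card H = 0" by simp
      thus False using gal dpos unfolding H_def by simp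
    qed
    define V where "V = (\<lambda>(s, t). {x \<in> F. s x = t x}) ` {(s, t). s \<in> H \<and> t \<in> H \<and> s \<noteq> t}"
    have finV: "finite V" unfolding V_def
      by (rule finite_imageI, rule finite_subset[of _ "H \<times> H"]) (use finH in auto)
    have Wprops: "W \<subseteq> F \<and> (\<forall>x\<in>W. \<forall>y\<in>W. x \<oplus> y \<in> W) \<and> (\<forall>c\<in>K. \<forall>x\<in>W. c \<otimes> x \<in> W) \<and> (\<exists>x\<in>F. x \<notin> W)"
      if WV: "W \<in> V" for W
    proof -
      obtain s t where st: "s \<in> H" "t \<in> H" "s \<noteq> t" "W = {x \<in> F. s x = t x}" using WV unfolding V_def by auto
      interpret S: ring_hom_ring "R\<lparr>carrier := F\<rparr>" "R\<lparr>carrier := F\<rparr>" s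
        using aut_over_hom[OF KF Fs] st unfolding H_def by auto
      interpret T: ring_hom_ring "R\<lparr>carrier := F\<rparr>" "R\<lparr>carrier := F\<rparr>" t
        using aut_over_hom[OF KF Fs] st unfolding H_def by auto
      have fs: "\<forall>x\<in>K. s x = x" "\<forall>x\<in>K. t x = x" "s \<in> extensional F" "t \<in> extensional F"
        using st aut_over_mem[OF KF Fs] unfolding H_def by auto
      have add: "\<forall>x\<in>W. \<forall>y\<in>W. x \<oplus> y \<in> W"
        using st(4) S.hom_add T.hom_add subringE(7)[OF Fs] by auto
      have sm: "\<forall>c\<in>K. \<forall>x\<in>W. c \<otimes> x \<in> W"
      proof (intro ballI)
        fix c x assume c: "c \<in> K" and x: "x \<in> W"
        have cF: "c \<in> F" using c KF by auto
        have "s (c \<otimes> x) = s c \<otimes> s x" using S.hom_mult[of c x] cF x st(4) by simp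
        moreover have "t (c \<otimes> x) = t c \<otimes> t x" using T.hom_mult[of c x] cF x st(4) by simp
        ultimately show "c \<otimes> x \<in> W" using fs c x st(4) subringE(6)[OF Fs] cF by auto
      qed
      have "\<exists>x\<in>F. s x \<noteq> t x"
        using st(3) fs(3,4) extensionalityI[of s F t] by blast
      thus ?thesis using st(4) add sm by auto
    qed
    obtain \<theta> where \<theta>: "\<theta> \<in> F" "\<forall>W\<in>V. \<theta> \<notin> W"
      using avoid_subspaces[OF K infK Fs KF finV Wprops] by blast
    have injH: "inj_on (\<lambda>s. s \<theta>) H"
    proof
      fix s t assume st: "s \<in> H" "t \<in> H" "s \<theta> = t \<theta>"
      show "s = t"
      proof (rule ccontr)
        assume "s \<noteq> t"
        hence "{x \<in> F. s x = t x} \<in> V" using st unfolding V_def by auto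
        thus False using \<theta> st by auto
      qed
    qed
    note sf = simple_ext_facts[OF K F KF fin \<theta>(1)]
    have \<theta>c: "\<theta> \<in> carrier R" using \<theta>(1) Fc by auto
    define S where "S = {\<beta> \<in> carrier R. eval (Irr K \<theta>) \<beta> = \<zero>}"
    note rb = roots_set_bound[OF Irr_props(2,3)[OF K \<theta>c sf(1)], folded S_def]
    have "(\<lambda>s. s \<theta>) ` H \<subseteq> S"
      unfolding S_def H_def using aut_root[OF K F KF \<theta>(1) sf(1)] Fc by blast
    hence "card H \<le> card S" using card_inj_on_le[OF injH _ rb(1)] by simp
    hence le: "dim K F \<le> degree (Irr K \<theta>)" using rb(2) gal unfolding H_def by simp
    have m1: "dim (simple_extension K \<theta>) F = 1"
    proof -
      have dp: "degree (Irr K \<theta>) > 0" using sf(7) dpos by (cases "degree (Irr K \<theta>) = 0") auto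
      have "degree (Irr K \<theta>) * dim (simple_extension K \<theta>) F \<le> degree (Irr K \<theta>) * 1"
        using le sf(7) by simp
      hence "dim (simple_extension K \<theta>) F \<le> 1" using dp by (simp only: mult_le_cancel1)
      thus ?thesis using sf(8) by simp
    qed
    obtain m where m: "dimension m (simple_extension K \<theta>) F" using sf(6) by auto
    have "m = 1" using dimI[OF sf(2) m] m1 by (simp add: over_def)
    hence "simple_extension K \<theta> = F"
      using dim_eq_imp_eq[OF sf(2) sf(3) dimension_one[OF sf(2)]] m by simp
    thus ?thesis using \<theta>(1) by blast
  qed
qed

end

context field
begin

lemma split_coeffs_in:
  assumes F: "subfield F R"
  shows "g \<in> carrier (poly_ring R) \<Longrightarrow> g \<noteq> [] \<Longrightarrow> lead_coeff g = \<one> \<Longrightarrow> splitted g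
         \<Longrightarrow> set_mset (roots g) \<subseteq> F \<Longrightarrow> set g \<subseteq> F"
proof (induction "degree g" arbitrary: g rule: less_induct)
  case less
  have Fs: "subring F R" using subfieldE(1)[OF F] .
  show ?case
  proof (cases "degree g = 0")
    case True
    hence "g = [\<one>]" using less.prems(2,3) by (cases g) auto
    thus ?thesis using subringE(3)[OF Fs] by simp
  next
    case False
    hence "size (roots g) > 0" using less.prems(4) unfolding splitted_def by simp
    then obtain a where a: "a \<in># roots g" by (cases "roots g") auto
    have aF: "a \<in> F" using a less.prems(5) by auto
    have rt: "is_root g a" using roots_mem_iff_is_root[OF less.prems(1)] a by simp
    hence ac: "a \<in> carrier R" unfolding is_root_def by simp
    define lin where "lin = [\<one>, \<ominus> a]"
    have "lin pdivides g" unfolding lin_def using is_root_imp_pdivides[OF less.prems(1) rt] .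
    then obtain q where q: "q \<in> carrier (poly_ring R)" "g = lin \<otimes>\<^bsub>poly_ring R\<^esub> q"
      unfolding pdivides_def factor_def by auto
    have linF: "polynomial F lin" unfolding lin_def polynomial_def
      using subringE(3,5)[OF Fs] aF by auto
    have linc: "lin \<in> carrier (poly_ring R)"
      unfolding lin_def univ_poly_carrier[symmetric] polynomial_def using ac by auto
    have qp: "polynomial (carrier R) q" using q(1) univ_poly_carrier by blast
    have linp: "polynomial (carrier R) lin" using linc univ_poly_carrier by blast
    have gm: "g = poly_mult lin q" using q(2) unfolding univ_poly_mult[of R "carrier R"] .
    have qnz: "q \<noteq> []"
    proof
      assume "q = []"
      hence "g = poly_mult lin []" using gm by simp
      also have "\<dots> = []" using poly_mult_zero(2) polynomial_in_carrier[OF carrier_is_subring linp] by simp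
      finally show False using less.prems(2) by simp
    qed
    have dg: "degree g = Suc (degree q)"
      using poly_mult_degree_eq[OF carrier_is_subring linp qp] gm qnz unfolding lin_def by simp
    have "lead_coeff g = \<one> \<otimes> lead_coeff q"
      using poly_mult_lead_coeff[OF carrier_is_subring linp qp _ qnz] gm unfolding lin_def by simp
    moreover have "lead_coeff q \<in> carrier R" using qp qnz polynomial_in_carrier[OF carrier_is_subring qp]
      by (cases q) auto
    ultimately have lq: "lead_coeff q = \<one>" using less.prems(3) by simp
    interpret UP: cring "poly_ring R" using univ_poly_is_cring[OF carrier_is_subring] .
    have "q pdivides g" unfolding pdivides_def
      by (rule dividesI[OF linc]) (use q UP.m_comm[OF linc q(1)] in simp)
    hence sq: "splitted q" using pdivides_imp_splitted[OF q(1) less.prems(1,2,4)] by simp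
    have "roots q \<subseteq># roots g" using pdivides_imp_roots_incl[OF q(1) less.prems(1,2)] \<open>q pdivides g\<close> by simp
    hence rq: "set_mset (roots q) \<subseteq> F" using less.prems(5) set_mset_mono by blast
    have "set q \<subseteq> F" using less.hyps[of q] dg q(1) qnz lq sq rq by simp
    hence "polynomial F (poly_mult lin q)"
      using poly_mult_is_polynomial[OF Fs polynomial_incl[OF linF]] by simp
    thus ?thesis using gm polynomial_incl by simp
  qed
qed

lemma compositum_degree:
  assumes K: "subfield K R" and split: "\<And>P. P \<in> carrier (K[X]) \<Longrightarrow> splitted P"
    and E: "subfield E R" and KE: "K \<subseteq> E" and finE: "finite_dimension K E"
    and F: "subfield F R" and KF: "K \<subseteq> F" and finF: "finite_dimension K F"
    and gal: "card (aut_over R K F) = dim K F"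
    and EF: "E \<inter> F \<subseteq> K"
  shows "finite_dimension K (generate_field R (E \<union> F))"
    "dim K (generate_field R (E \<union> F)) = dim K E * dim K F"
proof -
  obtain \<theta> where \<theta>: "\<theta> \<in> F" "simple_extension K \<theta> = F"
    using primitive_element[OF K F KF finF gal] by auto
  have Fs: "subring F R" using subfieldE(1)[OF F] .
  have Es: "subring E R" using subfieldE(1)[OF E] .
  have \<theta>c: "\<theta> \<in> carrier R" using \<theta>(1) subringE(1)[OF Fs] by auto
  have algK: "(algebraic over K) \<theta>" using simple_ext_facts(1)[OF K F KF finF \<theta>(1)] .
  have algE: "(algebraic over E) \<theta>" using algebraic_mono[OF KE algK] .
  define E\<theta> where "E\<theta> = simple_extension E \<theta>"
  have E\<theta>: "subfield E\<theta> R" unfolding E\<theta>_def using simple_extension_is_subfield[OF E \<theta>c] algE by simp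
  define gf where "gf = generate_field R (E \<union> F)"
  have EFc: "E \<union> F \<subseteq> carrier R" using subringE(1)[OF Es] subringE(1)[OF Fs] by auto
  have gfs: "subfield gf R" unfolding gf_def using generate_field_is_subfield[OF EFc] .
  have "gf \<subseteq> E\<theta>"
  proof -
    have "E \<subseteq> E\<theta>" unfolding E\<theta>_def using simple_extension_incl[OF _ \<theta>c] subringE(1)[OF Es] by auto
    moreover have "F \<subseteq> E\<theta>" unfolding E\<theta>_def using mono_simple_extension[OF KE] \<theta>(2) by blast
    ultimately show ?thesis unfolding gf_def using generate_field_min_subfield1[OF EFc E\<theta>] by simp
  qed
  moreover have "E\<theta> \<subseteq> gf"
  proof -
    have sub: "E \<union> F \<subseteq> gf" unfolding gf_def using generate_fieldE(2)[OF EFc refl] .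
    have "E \<subseteq> gf" "\<theta> \<in> gf" using sub \<theta>(1) by auto
    thus ?thesis unfolding E\<theta>_def using simple_extension_subring_incl[OF subfieldE(1)[OF gfs]] by simp
  qed
  ultimately have gfeq: "gf = E\<theta>" by (rule subset_antisym)
  define g where "g = Irr E \<theta>"
  define f where "f = Irr K \<theta>"
  have fK: "f \<in> carrier (K[X])" unfolding f_def using IrrE(1)[OF K \<theta>c algK] .
  have fE: "f \<in> carrier (E[X])" using fK KE unfolding univ_poly_carrier[symmetric] polynomial_def by auto
  have gf_div: "g pdivides f" unfolding g_def
    using Irr_minimal[OF E \<theta>c algE fE] Irr_props(4)[OF K \<theta>c algK] unfolding f_def by simp
  note fp = Irr_props[OF K \<theta>c algK, folded f_def]
  note gp = Irr_props[OF E \<theta>c algE, folded g_def]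
  have sf: "splitted f" using split[OF fK] .
  have sg: "splitted g" using pdivides_imp_splitted[OF gp(2) fp(2,3) sf] gf_div by simp
  have "roots g \<subseteq># roots f" using pdivides_imp_roots_incl[OF gp(2) fp(2,3)] gf_div by simp
  moreover have "set_mset (roots f) \<subseteq> F"
  proof
    fix r assume "r \<in># roots f"
    hence "is_root f r" using roots_mem_iff_is_root[OF fp(2)] by simp
    hence "r \<in> carrier R" "eval (Irr K \<theta>) r = \<zero>" unfolding is_root_def f_def by auto
    thus "r \<in> F" using galois_normal[OF K F KF finF gal \<theta>(1)] by simp
  qed
  ultimately have rg: "set_mset (roots g) \<subseteq> F" using set_mset_mono by blast
  have lg: "lead_coeff g = \<one>" unfolding g_def using IrrE(3)[OF E \<theta>c algE] .
  have "set g \<subseteq> F" using split_coeffs_in[OF F gp(2,3) lg sg rg] .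
  hence gK0: "set g \<subseteq> K" using gp(1) EF by auto
  have gK: "g \<in> carrier (K[X])"
    using gK0 lg unfolding univ_poly_carrier[symmetric] polynomial_def by auto
  have fg_div: "f pdivides g" unfolding f_def
    using Irr_minimal[OF K \<theta>c algK gK] gp(4) by simp
  have fpc: "f \<in> carrier ((carrier R)[X])" using fp(2) .
  have gpc: "g \<in> carrier ((carrier R)[X])" using gp(2) .
  have "degree f \<le> degree g" using pdivides_imp_degree_le[OF carrier_is_subring fpc gpc gp(3)] fg_div by simp
  moreover have "degree g \<le> degree f" using pdivides_imp_degree_le[OF carrier_is_subring gpc fpc fp(3)] gf_div by simp
  ultimately have deq: "degree g = degree f" by simp
  have dE: "dimension (degree g) E E\<theta>" unfolding g_def E\<theta>_def using dimension_simple_extension[OF E \<theta>c algE] .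
  have dF: "dimension (degree f) K F" unfolding f_def using dimension_simple_extension[OF K \<theta>c algK] \<theta>(2) by simp
  have tb: "finite_dimension K E\<theta>" "dim K E\<theta> = dim K E * dim E E\<theta>"
    using telescopic_base_dim[OF K E finE finite_dimensionI[OF dE]] by (auto simp: over_def)
  show "finite_dimension K (generate_field R (E \<union> F))" using tb(1) gfeq unfolding gf_def by simp
  show "dim K (generate_field R (E \<union> F)) = dim K E * dim K F"
    using tb(2) gfeq dimI[OF E dE] dimI[OF K dF] deq unfolding gf_def by (simp add: over_def)
qed

end

lemma filter_remdups_cons: "K \<notin> set xs \<Longrightarrow> filter (\<lambda>E. E \<noteq> K) (remdups (K # xs)) = remdups xs"
  by (auto simp: filter_id_conv)

lemma remdups_map_inj: "inj_on f (set xs) \<Longrightarrow> remdups (map f xs) = map f (remdups xs)"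
proof (induction xs)
  case (Cons x xs)
  have "f x \<in> f ` set xs \<longleftrightarrow> x \<in> set xs" using Cons.prems by (auto simp: inj_on_def)
  thus ?case using Cons by (auto simp: inj_on_insert)
qed simp

lemma sort_map_mult: "0 < d \<Longrightarrow> sort (map (\<lambda>a. d * a) zs) = map (\<lambda>a. d * (a::nat)) (sort zs)"
  by (rule properties_for_sort) (auto simp: sorted_map intro: sorted_wrt_mono_rel[OF _ sorted_sort])

context field
begin

lemma genfield_absorb:
  assumes "H \<subseteq> carrier R" "K \<subseteq> F" "subfield F R"
  shows "generate_field R (H \<union> F) = generate_field R (generate_field R (H \<union> K) \<union> F)"
proof
  have Fc: "F \<subseteq> carrier R" using subringE(1)[OF subfieldE(1)[OF assms(3)]] .
  have HKc: "H \<union> K \<subseteq> carrier R" using assms(1,2) Fc by blast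
  have gc: "generate_field R (H \<union> K) \<union> F \<subseteq> carrier R" using generate_field_incl[OF HKc] Fc by auto
  have "H \<union> F \<subseteq> generate_field R (H \<union> K) \<union> F" using generate_fieldE(2)[OF HKc refl] by auto
  thus "generate_field R (H \<union> F) \<subseteq> generate_field R (generate_field R (H \<union> K) \<union> F)"
    using mono_generate_field[OF _ gc] by simp
  have HFc: "H \<union> F \<subseteq> carrier R" using assms Fc by auto
  have "generate_field R (H \<union> K) \<subseteq> generate_field R (H \<union> F)"
    using mono_generate_field[OF _ HFc, of "H \<union> K"] assms(2) by auto
  moreover have "F \<subseteq> generate_field R (H \<union> F)" using generate_fieldE(2)[OF HFc refl] by auto
  ultimately show "generate_field R (generate_field R (H \<union> K) \<union> F) \<subseteq> generate_field R (H \<union> F)"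
    using generate_field_min_subfield1[OF gc generate_field_is_subfield[OF HFc]] by auto
qed

end

theorem mainTheorem7:
  fixes Om :: "('a, 'b) ring_scheme" and K L F M :: "'a set" and d :: nat
    and Ls :: "'a set list" and l :: nat
  assumes closure: "algebraic_closure Om K"
    and perfect: "perfect_subfield Om K"
    and magn: "strong_cluster_magnification Om K M L F"
    and deg_F: "degree_over Om K F = d"
    and Ls_distinct: "distinct Ls"
    and Ls_set: "set Ls = conjugates Om K L"
  shows "(tower_length (tower Om K Ls K) = l \<longleftrightarrow> tower_length (tower Om K Ls F) = l)
    \<and> (tower_length (tower Om K Ls K) = l \<longrightarrow>
         degree_sequence Om K (tower Om K Ls F) = map (\<lambda>a. d * a) (degree_sequence Om K (tower Om K Ls K)))"
proof -
  interpret C: algebraic_closure Om K by (fact closure)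
  have K: "subfield K Om" using closure unfolding algebraic_closure_def by auto
  have Kc: "K \<subseteq> carrier Om" using subfieldE(3)[OF K] .
  have L: "subfield L Om" and KL: "K \<subseteq> L" and finL: "C.finite_dimension K L" and degL: "C.dim K L > 2"
    and F: "subfield F Om" and KF: "K \<subseteq> F" and finF: "C.finite_dimension K F"
    and gal: "card (aut_over Om K F) = C.dim K F"
    and NF: "galois_closure Om K L \<inter> F = K"
    using magn unfolding strong_cluster_magnification_def finite_ext_def galois_ext_def intermediate_def degree_over_def
    by auto
  have d: "d = C.dim K F" using deg_F unfolding degree_over_def by simp
  have conjI: "subfield E' Om \<and> K \<subseteq> E' \<and> (\<exists>\<psi>. \<psi> \<in> ring_iso (Om\<lparr>carrier := L\<rparr>) (Om\<lparr>carrier := E'\<rparr>) \<and> (\<forall>x\<in>K. \<psi> x = x))"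
    if "E' \<in> set Ls" for E'
    using that Ls_set unfolding conjugates_def intermediate_def iso_over_def by auto
  define U where "U = (\<lambda>k. \<Union> (set (take k Ls)))"
  define e where "e = (\<lambda>k. generate_field Om (U k \<union> K))"
  define \<phi> where "\<phi> = (\<lambda>E. generate_field Om (E \<union> F))"
  define ks where "ks = [1..<Suc (length Ls)]"
  have Uc: "U k \<subseteq> carrier Om" for k
  proof -
    have "E' \<subseteq> carrier Om" if E'k: "E' \<in> set (take k Ls)" for E'
    proof -
      have "E' \<in> set Ls" using E'k in_set_takeD by fast
      hence "subfield E' Om" using conjI by blast
      thus ?thesis using subringE(1)[OF subfieldE(1)] by blast
    qed
    thus ?thesis unfolding U_def by auto
  qed
  have UKc: "U k \<union> K \<subseteq> carrier Om" for k using Uc Kc by auto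
  have towerK: "tower Om K Ls K = K # map e ks"
    unfolding tower_def ks_def e_def U_def compositum_def by (simp add: Un_commute)
  have towerF: "tower Om K Ls F = K # map \<phi> (map e ks)"
  proof -
    have "compositum Om (set (take k Ls) \<union> {F}) = \<phi> (e k)" for k
      unfolding compositum_def \<phi>_def e_def
      using C.genfield_absorb[OF Uc KF F, of k] unfolding U_def by (simp add: Un_commute)
    thus ?thesis unfolding tower_def ks_def by simp
  qed
  have e_sub: "subfield (e k) Om" for k unfolding e_def using C.generate_field_is_subfield[OF UKc] .
  have Ke: "K \<subseteq> e k" for k unfolding e_def using C.generate_fieldE(2)[OF UKc refl] by auto
  have Ue: "U k \<subseteq> e k" for k unfolding e_def using C.generate_fieldE(2)[OF UKc refl] by auto
  have e_ne: "e k \<noteq> K" if "k \<in> set ks" for k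
  proof
    assume ek: "e k = K"
    have k: "1 \<le> k" "k \<le> length Ls" using that unfolding ks_def by auto
    hence ne: "Ls \<noteq> []" by auto
    define L1 where "L1 = hd Ls"
    have L1s: "L1 \<in> set (take k Ls)" unfolding L1_def using ne k by (cases Ls) (auto simp: take_Cons')
    have L1: "L1 \<in> set Ls" using L1s in_set_takeD by fast
    have "L1 \<subseteq> K" using L1s Ue[of k] ek unfolding U_def by auto
    hence L1K: "L1 = K" using conjI[OF L1] by auto
    obtain \<psi> where \<psi>: "\<psi> \<in> ring_iso (Om\<lparr>carrier := L\<rparr>) (Om\<lparr>carrier := L1\<rparr>)" "\<forall>x\<in>K. \<psi> x = x"
      using conjI[OF L1] by auto
    have bij: "bij_betw \<psi> L L1" using ring_iso_memE(5)[OF \<psi>(1)] by simp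
    have "L \<subseteq> K"
    proof
      fix x assume x: "x \<in> L"
      have "\<psi> x \<in> K" using bij x L1K by (auto simp: bij_betw_def)
      hence "\<psi> (\<psi> x) = \<psi> x" "\<psi> x \<in> L" using \<psi>(2) KL by auto
      hence "\<psi> x = x" using bij x by (auto simp: bij_betw_def inj_on_def)
      thus "x \<in> K" using \<open>\<psi> x \<in> K\<close> by simp
    qed
    hence "L = K" using KL by auto
    hence "C.dim K L = 1" using C.dimI[OF K C.dimension_one[OF K]] by (simp add: over_def)
    thus False using degL by simp
  qed
  show ?thesis
  proof (cases "{G. galois_ext Om K G \<and> L \<subseteq> G} = {}")
    case True
    hence "galois_closure Om K L = UNIV" unfolding galois_closure_def by auto
    hence FK: "F = K" using NF by auto
    have "d = 1" using d FK C.dimI[OF K C.dimension_one[OF K]] by (simp add: over_def)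
    thus ?thesis using FK by simp
  next
    case False
    then obtain G0 where G0: "galois_ext Om K G0" "L \<subseteq> G0" by auto
    have G0s: "subfield G0 Om" and finG0: "C.finite_dimension K G0"
      using G0 unfolding galois_ext_def finite_ext_def intermediate_def by auto
    have LiG: "E' \<subseteq> G" if E'L: "E' \<in> set Ls" and Gg: "galois_ext Om K G" and LG: "L \<subseteq> G" for E' G
    proof -
      have G: "subfield G Om" "K \<subseteq> G" "C.finite_dimension K G" "card (aut_over Om K G) = C.dim K G"
        using Gg unfolding galois_ext_def finite_ext_def intermediate_def degree_over_def by auto
      have cj: "subfield E' Om" "K \<subseteq> E'" "\<exists>\<psi>. \<psi> \<in> ring_iso (Om\<lparr>carrier := L\<rparr>) (Om\<lparr>carrier := E'\<rparr>) \<and> (\<forall>x\<in>K. \<psi> x = x)"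
        using conjI[OF E'L] by auto
      obtain \<psi> where \<psi>: "\<psi> \<in> ring_iso (Om\<lparr>carrier := L\<rparr>) (Om\<lparr>carrier := E'\<rparr>)" "\<forall>x\<in>K. \<psi> x = x"
        using cj(3) by blast
      show ?thesis
        using C.conj_in_galois[OF K G(1,2,3,4) LG subfieldE(1)[OF L] subfieldE(1)[OF cj(1)] KL \<psi>] .
    qed
    have eG: "e k \<subseteq> G" if Gg: "galois_ext Om K G" and LG: "L \<subseteq> G" for k G
    proof -
      have G: "subfield G Om" "K \<subseteq> G"
        using Gg unfolding galois_ext_def finite_ext_def intermediate_def by auto
      have "U k \<subseteq> G"
      proof
        fix x assume "x \<in> U k"
        then obtain E' where E': "E' \<in> set (take k Ls)" "x \<in> E'" unfolding U_def by auto
        have "E' \<in> set Ls" using E'(1) in_set_takeD by fast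
        thus "x \<in> G" using LiG[OF _ Gg LG] E'(2) by blast
      qed
      thus ?thesis unfolding e_def using C.generate_field_min_subfield1[OF UKc G(1)] G(2) by auto
    qed
    have eF: "e k \<inter> F \<subseteq> K" for k
    proof -
      have "e k \<subseteq> galois_closure Om K L" unfolding galois_closure_def using eG by auto
      thus ?thesis using NF by auto
    qed
    have fin_e: "C.finite_dimension K (e k)" for k
      using C.subalbegra_incl_imp_finite_dimension[OF K finG0 C.subring_subalgebra[OF subfieldE(1)[OF e_sub] Ke] eG[OF G0]] .
    have split: "\<And>P. P \<in> carrier (K[X]\<^bsub>Om\<^esub>) \<Longrightarrow> C.splitted P" using C.roots_over_subfield by simp
    have degphi: "C.dim K (\<phi> (e k)) = C.dim K (e k) * d" for k
      unfolding \<phi>_def d using C.compositum_degree(2)[OF K split e_sub Ke fin_e F KF finF gal eF] .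
    have dpos: "d > 0"
    proof -
      obtain n where n: "C.dimension n K F" using finF by auto
      show ?thesis using C.dim_pos[OF K subfieldE(1)[OF F] n] C.dimI[OF K n] d by (simp add: over_def)
    qed
    have emono: "e j \<subseteq> e k" if "j \<le> k" for j k
    proof -
      have "U j \<subseteq> U k" unfolding U_def using set_take_subset_set_take[OF that, of Ls] by blast
      hence "U j \<union> K \<subseteq> U k \<union> K" by auto
      thus ?thesis unfolding e_def using C.mono_generate_field[OF _ UKc[of k]] by blast
    qed
    have einj: "e j = e k" if "\<phi> (e j) = \<phi> (e k)" for j k
    proof -
      have aux: "e a = e b" if ab: "a \<le> b" "\<phi> (e a) = \<phi> (e b)" for a b
      proof -
        have "C.dim K (e a) * d = C.dim K (e b) * d" using degphi[of a] degphi[of b] ab(2) by argo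
        hence deq: "C.dim K (e a) = C.dim K (e b)" using dpos by simp
        obtain n where n: "C.dimension n K (e a)" using fin_e[of a] by auto
        obtain m where m: "C.dimension m K (e b)" using fin_e[of b] by auto
        have "n = m" using C.dimI[OF K n] C.dimI[OF K m] deq by (simp add: over_def)
        thus ?thesis using C.dim_eq_imp_eq[OF K emono[OF ab(1)] n] m by simp
      qed
      show ?thesis
      proof (cases "j \<le> k")
        case True show ?thesis by (rule aux[OF True that])
      next
        case False
        hence kj: "k \<le> j" by simp
        show ?thesis by (rule sym, rule aux[OF kj that[symmetric]])
      qed
    qed
    have phi_inj: "inj_on \<phi> (set (map e ks))"
    proof (rule inj_onI)
      fix x y assume "x \<in> set (map e ks)" "y \<in> set (map e ks)" "\<phi> x = \<phi> y"
      then obtain j k where "x = e j" "y = e k" "\<phi> (e j) = \<phi> (e k)" by auto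
      thus "x = y" using einj[of j k] by simp
    qed
    have ephi: "e k \<subseteq> \<phi> (e k)" for k
    proof -
      have c: "e k \<union> F \<subseteq> carrier Om" using C.generate_field_incl[OF UKc] subringE(1)[OF subfieldE(1)[OF F]] unfolding e_def by auto
      show ?thesis unfolding \<phi>_def using C.generate_fieldE(2)[OF c refl] by auto
    qed
    have phi_ne: "\<phi> (e k) \<noteq> K" if "k \<in> set ks" for k
      using e_ne[OF that] ephi[of k] Ke[of k] by auto
    have K_notin1: "K \<notin> set (map e ks)" using e_ne by auto
    have K_notin2: "K \<notin> set (map \<phi> (map e ks))" using phi_ne by auto
    have len: "tower_length (tower Om K Ls K) = tower_length (tower Om K Ls F)"
    proof -
      have "tower_length (tower Om K Ls K) = Suc (card (set (map e ks)))"
        unfolding tower_length_def towerK using K_notin1 by simp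
      moreover have "tower_length (tower Om K Ls F) = Suc (card (set (map \<phi> (map e ks))))"
        unfolding tower_length_def towerF using K_notin2 by simp
      moreover have "card (set (map \<phi> (map e ks))) = card (set (map e ks))"
        using card_image[OF phi_inj] by (simp add: image_comp)
      ultimately show ?thesis by simp
    qed
    have ds: "degree_sequence Om K (tower Om K Ls F) = map (\<lambda>a. d * a) (degree_sequence Om K (tower Om K Ls K))"
    proof -
      have "degree_sequence Om K (tower Om K Ls F) = sort (map (degree_over Om K) (map \<phi> (remdups (map e ks))))"
        unfolding degree_sequence_def towerF filter_remdups_cons[OF K_notin2] remdups_map_inj[OF phi_inj] ..
      also have "map (degree_over Om K) (map \<phi> (remdups (map e ks))) = map (\<lambda>a. d * a) (map (degree_over Om K) (remdups (map e ks)))"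
        unfolding degree_over_def using degphi by (auto simp: mult.commute)
      also have "sort \<dots> = map (\<lambda>a. d * a) (sort (map (degree_over Om K) (remdups (map e ks))))"
        using sort_map_mult[OF dpos] .
      also have "\<dots> = map (\<lambda>a. d * a) (degree_sequence Om K (tower Om K Ls K))"
        unfolding degree_sequence_def towerK filter_remdups_cons[OF K_notin1] ..
      finally show ?thesis .
    qed
    show ?thesis using len ds by simp
  qed
qed

end
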